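(* Consider the single-element, single-slab periodic space-time SBP scheme: unknowns $\boldsymbol\rho,\boldsymbol g_1,\dots,\boldsymbol g_{n_v}\in\mathbb R^{(n_t+1)(n_x+1)}$ satisfying $$\mathsf D_t\boldsymbol\rho+\tilde{\mathsf D}_x\langle v\boldsymbol g\rangle=-\sigma_a\boldsymbol\rho-\mathsf H_t^{-1}\mathsf t_B\mathsf t_B^\top(\boldsymbol\rho-\boldsymbol\rho(0)),$$ $$\mathsf D_t\boldsymbol g_k+\tfrac{v_k}{\varepsilon}\tilde{\mathsf D}_x\boldsymbol g_k-\tfrac1\varepsilon\langle v\tilde{\mathsf D}_x\boldsymbol g\rangle+\tfrac{v_k}{\varepsilon^2}\tilde{\mathsf D}_x\boldsymbol\rho=-\Big(\tfrac{\sigma_s}{\varepsilon^2}+\sigma_a\Big)\boldsymbol g_k-\mathsf H_t^{-1}\mathsf t_B\mathsf t_B^\top(\boldsymbol g_k-\boldsymbol g_k(0)),\quad k=1,\dots,n_v,$$ with initial data satisfying $\langle\boldsymbol g(0)\rangle=0$. Then the scheme is stable: every solution satisfies $$\tfrac12\boldsymbol\rho^\top(\bar{\boldsymbol t}_T\bar{\boldsymbol t}_T^\top\otimes\bar{\mathsf H}_x)\boldsymbol\rho+\tfrac{\varepsilon^2}2\langle\boldsymbol g^\top(\bar{\boldsymbol t}_T\bar{\boldsymbol t}_T^\top\otimes\bar{\mathsf H}_x)\boldsymbol g\rangle\le\tfrac12\boldsymbol\rho(0)^\top(\bar{\boldsymbol t}_B\bar{\boldsymbol t}_B^\top\otimes\bar{\mathsf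 H}_x)\boldsymbol\rho(0)+\tfrac{\varepsilon^2}2\langle\boldsymbol g(0)^\top(\bar{\boldsymbol t}_B\bar{\boldsymbol t}_B^\top\otimes\bar{\mathsf H}_x)\boldsymbol g(0)\rangle,$$ i.e. the discrete energy at the final time is bounded by the discrete energy of the initial data.
   Context: SBP operators: on nodes $x_0<\dots<x_n$, a matrix $\bar{\mathsf D}$ is a degree-$p$ SBP approximation of $d/dx$ if $\bar{\mathsf D}\boldsymbol x^k=k\boldsymbol x^{k-1}$ for $0\le k\le p$, $\bar{\mathsf D}=\bar{\mathsf H}^{-1}\bar{\mathsf Q}$ with $\bar{\mathsf H}$ diagonal symmetric positive definite, and $\bar{\mathsf Q}+\bar{\mathsf Q}^\top=\bar{\boldsymbol t}_R\bar{\boldsymbol t}_R^\top-\bar{\boldsymbol t}_L\bar{\boldsymbol t}_L^\top=\mathrm{diag}(-1,0,\dots,0,1)$, $\bar{\boldsymbol t}_L=(1,0,\dots,0)^\top$, $\bar{\boldsymbol t}_R=(0,\dots,0,1)^\top$. Let $\bar{\mathsf D}_x=\bar{\mathsf H}_x^{-1}\bar{\mathsf Q}_x$ be such an operator on $n_x+1$ spatial nodes and $\bar{\mathsf D}_t=\bar{\mathsf H}_t^{-1}\bar{\mathsf Q}_t$ one on $n_t+1$ temporal nodes with $\bar{\boldsymbol t}_B=(1,0,\dots,0)^\top$, $\bar{\boldsymbol t}_T=(0,\dots,0,1)^\top$. With identities $\mathsf I_{n_x},\mathsf I_{n_t}$ of sizes $n_x+1,n_t+1$: $\mathsf D_t=\bar{\mathsf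 D}_t\otimes\mathsf I_{n_x}$, $\mathsf D_x=\mathsf I_{n_t}\otimes\bar{\mathsf D}_x$, $\mathsf H_t=\bar{\mathsf H}_t\otimes\mathsf I_{n_x}$, $\mathsf H_x=\mathsf I_{n_t}\otimes\bar{\mathsf H}_x$, $\mathsf t_R=\mathsf I_{n_t}\otimes\bar{\boldsymbol t}_R$, $\mathsf t_L=\mathsf I_{n_t}\otimes\bar{\boldsymbol t}_L$, $\mathsf t_B=\bar{\boldsymbol t}_B\otimes\mathsf I_{n_x}$. Periodic operator: $\tilde{\mathsf D}_x=\mathsf D_x-\frac12\mathsf H_x^{-1}\big(\mathsf t_R(\mathsf t_R^\top-\mathsf t_L^\top)-\mathsf t_L(\mathsf t_L^\top-\mathsf t_R^\top)\big)$. Velocity nodes $v_k$ and weights $\omega_k$, $k=1,\dots,n_v$, with $\sum_k\omega_k=1$, $\sum_k\omega_kv_k=0$; $\langle\boldsymbol a\rangle=\sum_k\omega_k\boldsymbol a_k$ for $k$-indexed vectors or scalars (e.g. $\langle\boldsymbol g^\top M\boldsymbol g\rangle=\sum_k\omega_k\boldsymbol g_k^\top M\boldsymbol g_k$). Parameters $\varepsilon>0$, $\sigma_s>0$, $\sigma_a\ge0$. $\boldsymbol\rho(0),\boldsymbol g_k(0)$ are given initial-data vectors. *)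

theory Defs
  imports Complex_Main
begin

text \<open>Matrices are represented as functions nat => nat => real; dimensions are
carried explicitly (entries outside the index range are irrelevant).  Column vectors are (n x 1) matrices.\<close>

type_synonym rmat = "nat \<Rightarrow> nat \<Rightarrow> real"
type_synonym rvec = "nat \<Rightarrow> real"

definition idm :: "nat \<Rightarrow> rmat" where
  "idm n = (\<lambda>i j. if i = j then 1 else 0)"

definition mmul :: "nat \<Rightarrow> rmat \<Rightarrow> rmat \<Rightarrow> rmat" where
  "mmul m A B = (\<lambda>i j. \<Sum>l<m. A i l * B l j)"

definition mtr :: "rmat \<Rightarrow> rmat" where
  "mtr A = (\<lambda>i j. A j i)"

definition madd :: "rmat \<Rightarrow> rmat \<Rightarrow> rmat" where
  "madd A B = (\<lambda>i j. A i j + B i j)"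

definition msub :: "rmat \<Rightarrow> rmat \<Rightarrow> rmat" where
  "msub A B = (\<lambda>i j. A i j - B i j)"

definition msc :: "real \<Rightarrow> rmat \<Rightarrow> rmat" where
  "msc c A = (\<lambda>i j. c * A i j)"

definition mv :: "nat \<Rightarrow> rmat \<Rightarrow> rvec \<Rightarrow> rvec" where
  "mv m A x = (\<lambda>i. \<Sum>j<m. A i j * x j)"

definition kron :: "nat \<Rightarrow> nat \<Rightarrow> rmat \<Rightarrow> rmat \<Rightarrow> rmat" where
  "kron rB cB A B = (\<lambda>i j. A (i div rB) (j div cB) * B (i mod rB) (j mod cB))"

text \<open>Inverse of a diagonal matrix (only applied to diagonal matrices with
nonzero diagonal, where it is the matrix inverse).\<close>
definition dinv :: "rmat \<Rightarrow> rmat" where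
  "dinv H = (\<lambda>i j. if i = j then 1 / H i i else 0)"

definition qf :: "nat \<Rightarrow> rmat \<Rightarrow> rvec \<Rightarrow> real" where
  "qf N M x = (\<Sum>i<N. \<Sum>j<N. x i * M i j * x j)"

definition e_first :: "nat \<Rightarrow> rmat" where
  "e_first n = (\<lambda>i j. if i = 0 then 1 else 0)"

definition e_last :: "nat \<Rightarrow> rmat" where
  "e_last n = (\<lambda>i j. if i = n then 1 else 0)"

definition sbp :: "nat \<Rightarrow> nat \<Rightarrow> rvec \<Rightarrow> rmat \<Rightarrow> rmat \<Rightarrow> rmat \<Rightarrow> bool" where
  "sbp n p x D H Q \<longleftrightarrow>
     1 \<le> n \<and>
     (\<forall>i<n. x i < x (Suc i)) \<and>
     (\<forall>i\<le>n. \<forall>j\<le>n. i \<noteq> j \<longrightarrow> H i j = 0) \<and>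
     (\<forall>i\<le>n. 0 < H i i) \<and>
     (\<forall>i\<le>n. \<forall>j\<le>n. D i j = Q i j / H i i) \<and>
     (\<forall>i\<le>n. \<forall>j\<le>n. Q i j + Q j i =
        mmul 1 (e_last n) (mtr (e_last n)) i j - mmul 1 (e_first n) (mtr (e_first n)) i j) \<and>
     (\<forall>k\<le>p. \<forall>i\<le>n. (\<Sum>j\<le>n. D i j * x j ^ k) =
        (if k = 0 then 0 else real k * x i ^ (k - 1)))"

definition vavg :: "nat \<Rightarrow> (nat \<Rightarrow> real) \<Rightarrow> (nat \<Rightarrow> real) \<Rightarrow> real" where
  "vavg nv \<omega> a = (\<Sum>k=1..nv. \<omega> k * a k)"


text \<open>Space-time vectors have length (nt+1)(nx+1), time index outer:
entry number i*(nx+1)+j corresponds to time node i and space node j.\<close>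

definition Dt_st :: "nat \<Rightarrow> nat \<Rightarrow> rmat \<Rightarrow> rmat" where
  "Dt_st nt nx Dtb = kron (Suc nx) (Suc nx) Dtb (idm (Suc nx))"

definition Dx_st :: "nat \<Rightarrow> nat \<Rightarrow> rmat \<Rightarrow> rmat" where
  "Dx_st nt nx Dxb = kron (Suc nx) (Suc nx) (idm (Suc nt)) Dxb"

definition Ht_st :: "nat \<Rightarrow> nat \<Rightarrow> rmat \<Rightarrow> rmat" where
  "Ht_st nt nx Htb = kron (Suc nx) (Suc nx) Htb (idm (Suc nx))"

definition Hx_st :: "nat \<Rightarrow> nat \<Rightarrow> rmat \<Rightarrow> rmat" where
  "Hx_st nt nx Hxb = kron (Suc nx) (Suc nx) (idm (Suc nt)) Hxb"

definition tR_st :: "nat \<Rightarrow> nat \<Rightarrow> rmat" where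
  "tR_st nt nx = kron (Suc nx) 1 (idm (Suc nt)) (e_last nx)"

definition tL_st :: "nat \<Rightarrow> nat \<Rightarrow> rmat" where
  "tL_st nt nx = kron (Suc nx) 1 (idm (Suc nt)) (e_first nx)"

definition tB_st :: "nat \<Rightarrow> nat \<Rightarrow> rmat" where
  "tB_st nt nx = kron (Suc nx) (Suc nx) (e_first nt) (idm (Suc nx))"

definition Dxper_st :: "nat \<Rightarrow> nat \<Rightarrow> rmat \<Rightarrow> rmat \<Rightarrow> rmat" where
  "Dxper_st nt nx Dxb Hxb =
     msub (Dx_st nt nx Dxb)
       (msc (1/2) (mmul (Suc nt * Suc nx) (dinv (Hx_st nt nx Hxb))
          (msub (mmul (Suc nt) (tR_st nt nx) (msub (mtr (tR_st nt nx)) (mtr (tL_st nt nx))))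
                (mmul (Suc nt) (tL_st nt nx) (msub (mtr (tL_st nt nx)) (mtr (tR_st nt nx)))))))"

definition SAT_st :: "nat \<Rightarrow> nat \<Rightarrow> rmat \<Rightarrow> rmat" where
  "SAT_st nt nx Htb =
     mmul (Suc nt * Suc nx) (dinv (Ht_st nt nx Htb)) (mmul (Suc nx) (tB_st nt nx) (mtr (tB_st nt nx)))"

end

theory Submission imports Defs begin

definition dform :: "nat \<Rightarrow> (nat \<Rightarrow> real) \<Rightarrow> rvec \<Rightarrow> rvec \<Rightarrow> real" where
  "dform N d x y = (\<Sum>i<N. d i * x i * y i)"

lemma skew_sum:
  "dform N W x (mv N A y) + dform N W y (mv N A x)
   = (\<Sum>i<N. \<Sum>j<N. x i * (W i * A i j + W j * A j i) * y j)"
proof -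
  have 1: "dform N W x (mv N A y) = (\<Sum>i<N. \<Sum>j<N. x i * (W i * A i j) * y j)"
    unfolding dform_def mv_def by (simp add: sum_distrib_left mult_ac)
  have "dform N W y (mv N A x) = (\<Sum>i<N. \<Sum>j<N. W i * y i * A i j * x j)"
    unfolding dform_def mv_def by (simp add: sum_distrib_left mult_ac)
  also have "\<dots> = (\<Sum>j<N. \<Sum>i<N. W i * y i * A i j * x j)" by (rule sum.swap)
  also have "\<dots> = (\<Sum>i<N. \<Sum>j<N. x i * (W j * A j i) * y j)"
    by (simp add: mult_ac)
  finally show ?thesis using 1 by (simp add: sum.distrib[symmetric] distrib_left distrib_right)
qed

lemma diag_sum:
  assumes "\<forall>i<N. \<forall>j<N. A i j = (if i = j then d i else 0)"
  shows "(\<Sum>i<N. \<Sum>j<N. x i * A i j * y j) = dform N d x y"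
proof -
  have "(\<Sum>i<N. \<Sum>j<N. x i * A i j * y j) = (\<Sum>i<N. \<Sum>j<N. if i = j then x i * d i * y j else 0)"
    using assms by (intro sum.cong refl) auto
  also have "\<dots> = dform N d x y" unfolding dform_def by (simp add: mult_ac)
  finally show ?thesis .
qed

lemma diag_qf:
  assumes "\<forall>i<N. \<forall>j<N. A i j = (if i = j then d i else 0)"
  shows "qf N A x = dform N d x x"
  using diag_sum[OF assms] unfolding qf_def .

lemma mv_cong: "(\<And>j. j < N \<Longrightarrow> x j = y j) \<Longrightarrow> mv N A x i = mv N A y i"
  unfolding mv_def by simp

lemma mv_lin: "mv N A (\<lambda>j. \<Sum>k\<in>K. c k * f k j) i = (\<Sum>k\<in>K. c k * mv N A (f k) i)"
  unfolding mv_def by (simp add: sum_distrib_left mult_ac sum.swap[of _ K])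

lemma mv_diff: "mv N A (\<lambda>j. x j - y j) i = mv N A x i - mv N A y i"
  unfolding mv_def by (simp add: algebra_simps sum_subtractf)

lemma dform_cong2: "(\<And>i. i < N \<Longrightarrow> y i = z i) \<Longrightarrow> dform N W x y = dform N W x z"
  unfolding dform_def by simp

lemma dform_cong1: "(\<And>i. i < N \<Longrightarrow> y i = z i) \<Longrightarrow> dform N W y x = dform N W z x"
  unfolding dform_def by simp

lemma dform_lin1: "(\<Sum>k\<in>K. c k * dform N W (f k) y) = dform N W (\<lambda>i. \<Sum>k\<in>K. c k * f k i) y"
  unfolding dform_def by (simp add: sum_distrib_left sum_distrib_right mult_ac sum.swap[of _ K])

lemma dform_nonneg: "(\<And>i. i < N \<Longrightarrow> 0 \<le> d i) \<Longrightarrow> 0 \<le> dform N d x x"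
  unfolding dform_def by (intro sum_nonneg) (simp add: mult.assoc)

lemma dform_ineq: "(\<And>i. i < N \<Longrightarrow> 0 \<le> d i) \<Longrightarrow> 2 * dform N d x y \<le> dform N d x x + dform N d y y"
proof -
  assume h: "\<And>i. i < N \<Longrightarrow> 0 \<le> d i"
  have "\<And>i. i < N \<Longrightarrow> 2 * (d i * x i * y i) \<le> d i * x i * x i + d i * y i * y i"
  proof -
    fix i assume "i < N"
    hence "0 \<le> d i * (x i - y i)^2" using h by simp
    thus "2 * (d i * x i * y i) \<le> d i * x i * x i + d i * y i * y i"
      by (simp add: power2_eq_square algebra_simps)
  qed
  hence "(\<Sum>i<N. 2 * (d i * x i * y i)) \<le> (\<Sum>i<N. d i * x i * x i + d i * y i * y i)"
    by (intro sum_mono) simp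
  thus ?thesis unfolding dform_def by (simp add: sum.distrib sum_distrib_left)
qed

lemma dform_zero:
  assumes "\<And>i. i < N \<Longrightarrow> 0 < d i" "dform N d x x = 0" "i < N"
  shows "x i = 0"
proof -
  have "\<forall>i\<in>{..<N}. d i * x i * x i = 0"
    using assms(2) unfolding dform_def
    by (subst sum_nonneg_eq_0_iff[symmetric]) (auto simp: assms(1) less_imp_le mult.assoc)
  thus ?thesis using assms(1)[OF assms(3)] assms(3) by force
qed

lemma idx_eq:
  fixes n :: nat
  shows "(i = j) = (i div n = j div n \<and> i mod n = j mod n)"
  by (metis div_mult_mod_eq)

lemma div_bound: "i < Suc nt * Suc nx \<Longrightarrow> i div Suc nx \<le> nt"
  using less_mult_imp_div_less[of i "Suc nt" "Suc nx"] by simp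

lemma KT_diag:
  assumes Hoff: "\<forall>i\<le>nx. \<forall>j\<le>nx. i \<noteq> j \<longrightarrow> Hxb i j = 0"
  shows "\<forall>i<Suc nt * Suc nx. \<forall>j<Suc nt * Suc nx.
    kron (Suc nx) (Suc nx) (mmul 1 (e_last nt) (mtr (e_last nt))) Hxb i j
    = (if i = j then (if i div Suc nx = nt then Hxb (i mod Suc nx) (i mod Suc nx) else 0) else 0)"
proof (intro allI impI)
  fix i j assume "i < Suc nt * Suc nx" "j < Suc nt * Suc nx"
  have b: "i mod Suc nx \<le> nx" "j mod Suc nx \<le> nx" by (simp_all add: less_Suc_eq_le)
  show "kron (Suc nx) (Suc nx) (mmul 1 (e_last nt) (mtr (e_last nt))) Hxb i j
    = (if i = j then (if i div Suc nx = nt then Hxb (i mod Suc nx) (i mod Suc nx) else 0) else 0)"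
    unfolding kron_def mmul_def mtr_def e_last_def
    using Hoff b idx_eq[of i j "Suc nx"] by auto
qed

lemma KB_diag:
  assumes Hoff: "\<forall>i\<le>nx. \<forall>j\<le>nx. i \<noteq> j \<longrightarrow> Hxb i j = 0"
  shows "\<forall>i<Suc nt * Suc nx. \<forall>j<Suc nt * Suc nx.
    kron (Suc nx) (Suc nx) (mmul 1 (e_first nt) (mtr (e_first nt))) Hxb i j
    = (if i = j then (if i div Suc nx = 0 then Hxb (i mod Suc nx) (i mod Suc nx) else 0) else 0)"
proof (intro allI impI)
  fix i j assume "i < Suc nt * Suc nx" "j < Suc nt * Suc nx"
  have b: "i mod Suc nx \<le> nx" "j mod Suc nx \<le> nx" by (simp_all add: less_Suc_eq_le)
  show "kron (Suc nx) (Suc nx) (mmul 1 (e_first nt) (mtr (e_first nt))) Hxb i j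
    = (if i = j then (if i div Suc nx = 0 then Hxb (i mod Suc nx) (i mod Suc nx) else 0) else 0)"
    unfolding kron_def mmul_def mtr_def e_first_def
    using Hoff b idx_eq[of i j "Suc nx"] by auto
qed


lemma Dt_skew:
  assumes st: "sbp nt pt tn Dtb Htb Qtb"
  shows "\<forall>i<Suc nt * Suc nx. \<forall>j<Suc nt * Suc nx.
    (Htb (i div Suc nx) (i div Suc nx) * Hxb (i mod Suc nx) (i mod Suc nx)) * Dt_st nt nx Dtb i j
    + (Htb (j div Suc nx) (j div Suc nx) * Hxb (j mod Suc nx) (j mod Suc nx)) * Dt_st nt nx Dtb j i
    = (if i = j then (if i div Suc nx = nt then Hxb (i mod Suc nx) (i mod Suc nx) else 0)
         - (if i div Suc nx = 0 then Hxb (i mod Suc nx) (i mod Suc nx) else 0) else 0)"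
proof (intro allI impI)
  fix i j assume i: "i < Suc nt * Suc nx" and j: "j < Suc nt * Suc nx"
  define a where "a = i div Suc nx"
  define a' where "a' = j div Suc nx"
  define b where "b = i mod Suc nx"
  define b' where "b' = j mod Suc nx"
  have a: "a \<le> nt" "a' \<le> nt" using i j unfolding a_def a'_def by (simp_all add: div_bound)
  have Hp: "0 < Htb a a" "0 < Htb a' a'" using st a unfolding sbp_def by auto
  have D1: "Dtb a a' = Qtb a a' / Htb a a" "Dtb a' a = Qtb a' a / Htb a' a'"
    using st a unfolding sbp_def by auto
  have E: "Qtb a a' = Htb a a * Dtb a a'" "Qtb a' a = Htb a' a' * Dtb a' a" using Hp D1 by auto
  have Qs: "Qtb a a' + Qtb a' a = (if a = nt \<and> a' = nt then 1 else 0) - (if a = 0 \<and> a' = 0 then 1 else 0)"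
    using st a unfolding sbp_def by (auto simp: mmul_def mtr_def e_last_def e_first_def)
  have ij: "(i = j) = (a = a' \<and> b = b')" unfolding a_def a'_def b_def b'_def by (rule idx_eq)
  have "Htb a a * Hxb b b * Dt_st nt nx Dtb i j + Htb a' a' * Hxb b' b' * Dt_st nt nx Dtb j i
     = (if b = b' then Hxb b b * (Qtb a a' + Qtb a' a) else 0)"
    unfolding Dt_st_def kron_def idm_def a_def[symmetric] a'_def[symmetric] b_def[symmetric] b'_def[symmetric]
    using E by (auto simp: E[symmetric] algebra_simps)
  also have "\<dots> = (if i = j then (if a = nt then Hxb b b else 0) - (if a = 0 then Hxb b b else 0) else 0)"
    unfolding Qs ij by auto
  finally show "(Htb (i div Suc nx) (i div Suc nx) * Hxb (i mod Suc nx) (i mod Suc nx)) * Dt_st nt nx Dtb i j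
    + (Htb (j div Suc nx) (j div Suc nx) * Hxb (j mod Suc nx) (j mod Suc nx)) * Dt_st nt nx Dtb j i
    = (if i = j then (if i div Suc nx = nt then Hxb (i mod Suc nx) (i mod Suc nx) else 0)
         - (if i div Suc nx = 0 then Hxb (i mod Suc nx) (i mod Suc nx) else 0) else 0)"
    unfolding a_def a'_def b_def b'_def .
qed


lemma mmul_dinv: "i < N \<Longrightarrow> mmul N (dinv H) K i j = K i j / H i i"
  unfolding mmul_def dinv_def by (simp add: if_distrib[of "\<lambda>x. x * _"] cong: if_cong)

lemma sum_ind: "(a::nat) < n \<Longrightarrow> (\<Sum>c<n. (if a = c then 1 else 0) * (f c :: real)) = f a"
proof -
  assume "a < n"
  have "(\<Sum>c<n. (if a = c then 1 else 0) * (f c :: real)) = (\<Sum>c<n. if a = c then f c else 0)"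
    by (rule sum.cong) auto
  also have "\<dots> = f a" using \<open>a < n\<close> by (subst sum.delta') auto
  finally show ?thesis .
qed

lemma tRR: "i < Suc nt * Suc nx \<Longrightarrow>
  mmul (Suc nt) (tR_st nt nx) (msub (mtr (tR_st nt nx)) (mtr (tL_st nt nx))) i j
  = (if i div Suc nx = j div Suc nx \<and> i mod Suc nx = nx then
      (if j mod Suc nx = nx then 1 else 0) - (if j mod Suc nx = 0 then 1 else 0) else 0)"
  unfolding mmul_def tR_st_def tL_st_def kron_def msub_def mtr_def e_last_def e_first_def
  unfolding idm_def
  apply (simp only: div_by_1 mod_by_1 mult.assoc)
  apply (subst sum_ind)
  using div_bound[of i nt nx] apply simp
  by auto

lemma tLL: "i < Suc nt * Suc nx \<Longrightarrow>
  mmul (Suc nt) (tL_st nt nx) (msub (mtr (tL_st nt nx)) (mtr (tR_st nt nx))) i j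
  = (if i div Suc nx = j div Suc nx \<and> i mod Suc nx = 0 then
      (if j mod Suc nx = 0 then 1 else 0) - (if j mod Suc nx = nx then 1 else 0) else 0)"
  unfolding mmul_def tR_st_def tL_st_def kron_def msub_def mtr_def e_last_def e_first_def
  unfolding idm_def
  apply (simp only: div_by_1 mod_by_1 mult.assoc)
  apply (subst sum_ind)
  using div_bound[of i nt nx] apply simp
  by auto


lemma msub_app: "msub A B i j = A i j - B i j" unfolding msub_def by simp
lemma msc_app: "msc c A i j = c * A i j" unfolding msc_def by simp

lemma Dx_skew:
  assumes sx: "sbp nx px xn Dxb Hxb Qxb"
  shows "\<forall>i<Suc nt * Suc nx. \<forall>j<Suc nt * Suc nx.
    (Htb (i div Suc nx) (i div Suc nx) * Hxb (i mod Suc nx) (i mod Suc nx)) * Dxper_st nt nx Dxb Hxb i j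
    + (Htb (j div Suc nx) (j div Suc nx) * Hxb (j mod Suc nx) (j mod Suc nx)) * Dxper_st nt nx Dxb Hxb j i
    = 0"
proof (intro allI impI)
  fix i j assume i: "i < Suc nt * Suc nx" and j: "j < Suc nt * Suc nx"
  define a where "a = i div Suc nx"
  define a' where "a' = j div Suc nx"
  define b where "b = i mod Suc nx"
  define b' where "b' = j mod Suc nx"
  have bb: "b \<le> nx" "b' \<le> nx" unfolding b_def b'_def by (simp_all add: less_Suc_eq_le)
  have nx: "1 \<le> nx" using sx unfolding sbp_def by auto
  have Hp: "0 < Hxb b b" "0 < Hxb b' b'" using sx bb unfolding sbp_def by auto
  have D1: "Dxb b b' = Qxb b b' / Hxb b b" "Dxb b' b = Qxb b' b / Hxb b' b'"
    using sx bb unfolding sbp_def by auto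
  have E: "Qxb b b' = Hxb b b * Dxb b b'" "Qxb b' b = Hxb b' b' * Dxb b' b" using Hp D1 by auto
  have Qs: "Qxb b b' + Qxb b' b = (if b = nx \<and> b' = nx then 1 else 0) - (if b = 0 \<and> b' = 0 then 1 else 0)"
    using sx bb unfolding sbp_def by (auto simp: mmul_def mtr_def e_last_def e_first_def)
  have HX: "Hx_st nt nx Hxb i i = Hxb b b" "Hx_st nt nx Hxb j j = Hxb b' b'"
    unfolding Hx_st_def kron_def idm_def b_def b'_def by simp_all
  have Dx: "Dx_st nt nx Dxb i j = (if a = a' then Dxb b b' else 0)"
       "Dx_st nt nx Dxb j i = (if a = a' then Dxb b' b else 0)"
    unfolding Dx_st_def kron_def idm_def a_def a'_def b_def b'_def by auto
  have P1: "Dxper_st nt nx Dxb Hxb i j = (if a = a' then Dxb b b' else 0) - 1/2 *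
     ((if a = a' \<and> b = nx then (if b' = nx then 1 else 0) - (if b' = 0 then 1 else 0) else 0)
     - (if a = a' \<and> b = 0 then (if b' = 0 then 1 else 0) - (if b' = nx then 1 else 0) else 0)) / Hxb b b"
    unfolding Dxper_st_def
    apply (simp only: msub_app msc_app mmul_dinv[OF i] tRR[OF i] tLL[OF i] HX Dx)
    by (simp add: a_def a'_def b_def b'_def)
  have P2: "Dxper_st nt nx Dxb Hxb j i = (if a = a' then Dxb b' b else 0) - 1/2 *
     ((if a = a' \<and> b' = nx then (if b = nx then 1 else 0) - (if b = 0 then 1 else 0) else 0)
     - (if a = a' \<and> b' = 0 then (if b = 0 then 1 else 0) - (if b = nx then 1 else 0) else 0)) / Hxb b' b'"
    unfolding Dxper_st_def
    apply (simp only: msub_app msc_app mmul_dinv[OF j] tRR[OF j] tLL[OF j] HX Dx)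
    by (auto simp add: a_def a'_def b_def b'_def)
  have "Htb a a * Hxb b b * Dxper_st nt nx Dxb Hxb i j + Htb a' a' * Hxb b' b' * Dxper_st nt nx Dxb Hxb j i = 0"
  proof -
    have W1: "Hxb b b * Dxper_st nt nx Dxb Hxb i j = (if a = a' then Qxb b b' else 0) - 1/2 *
     ((if a = a' \<and> b = nx then (if b' = nx then 1 else 0) - (if b' = 0 then 1 else 0) else 0)
     - (if a = a' \<and> b = 0 then (if b' = 0 then 1 else 0) - (if b' = nx then 1 else 0) else 0))"
      unfolding P1 using Hp E by (simp add: field_simps)
    have W2: "Hxb b' b' * Dxper_st nt nx Dxb Hxb j i = (if a = a' then Qxb b' b else 0) - 1/2 *
     ((if a = a' \<and> b' = nx then (if b = nx then 1 else 0) - (if b = 0 then 1 else 0) else 0)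
     - (if a = a' \<and> b' = 0 then (if b = 0 then 1 else 0) - (if b = nx then 1 else 0) else 0))"
      unfolding P2 using Hp E by (simp add: field_simps)
    have Qs': "Qxb b' b = ((if b = nx \<and> b' = nx then 1 else 0) - (if b = 0 \<and> b' = 0 then 1 else 0)) - Qxb b b'"
      using Qs by simp
    show ?thesis unfolding mult.assoc W1 W2 Qs' using nx by (cases "a = a'") (auto simp: algebra_simps)
  qed
  then show "(Htb (i div Suc nx) (i div Suc nx) * Hxb (i mod Suc nx) (i mod Suc nx)) * Dxper_st nt nx Dxb Hxb i j
    + (Htb (j div Suc nx) (j div Suc nx) * Hxb (j mod Suc nx) (j mod Suc nx)) * Dxper_st nt nx Dxb Hxb j i
    = 0" unfolding a_def a'_def b_def b'_def .
qed


lemma tBB: "mmul (Suc nx) (tB_st nt nx) (mtr (tB_st nt nx)) i j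
  = (if i div Suc nx = 0 \<and> j div Suc nx = 0 \<and> i mod Suc nx = j mod Suc nx then 1 else 0)"
proof -
  have "mmul (Suc nx) (tB_st nt nx) (mtr (tB_st nt nx)) i j
     = (\<Sum>c<Suc nx. (if i mod Suc nx = c then 1 else 0) *
          ((if i div Suc nx = 0 then 1 else 0) * (if j div Suc nx = 0 then 1 else 0) * (if j mod Suc nx = c then 1 else 0)))"
    unfolding mmul_def tB_st_def kron_def mtr_def e_first_def idm_def
    by (rule sum.cong) auto
  also have "\<dots> = (if i div Suc nx = 0 \<and> j div Suc nx = 0 \<and> i mod Suc nx = j mod Suc nx then 1 else 0)"
    by (subst sum_ind) auto
  finally show ?thesis .
qed

lemma SAT_diag:
  assumes st: "sbp nt pt tn Dtb Htb Qtb"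
  shows "\<forall>i<Suc nt * Suc nx. \<forall>j<Suc nt * Suc nx.
    (Htb (i div Suc nx) (i div Suc nx) * Hxb (i mod Suc nx) (i mod Suc nx)) * SAT_st nt nx Htb i j
    = (if i = j then (if i div Suc nx = 0 then Hxb (i mod Suc nx) (i mod Suc nx) else 0) else 0)"
proof (intro allI impI)
  fix i j assume i: "i < Suc nt * Suc nx" and j: "j < Suc nt * Suc nx"
  have "i div Suc nx \<le> nt" using i by (rule div_bound)
  hence Hp: "0 < Htb (i div Suc nx) (i div Suc nx)" using st unfolding sbp_def by auto
  have HT: "Ht_st nt nx Htb i i = Htb (i div Suc nx) (i div Suc nx)"
    unfolding Ht_st_def kron_def idm_def by simp
  show "(Htb (i div Suc nx) (i div Suc nx) * Hxb (i mod Suc nx) (i mod Suc nx)) * SAT_st nt nx Htb i j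
    = (if i = j then (if i div Suc nx = 0 then Hxb (i mod Suc nx) (i mod Suc nx) else 0) else 0)"
    unfolding SAT_st_def
    apply (simp only: mmul_dinv[OF i] HT tBB)
    using Hp idx_eq[of i j "Suc nx"] by auto
qed


lemma E1_gen:
  assumes "\<forall>i<N. \<forall>j<N. W i * A i j + W j * A j i = (if i = j then dT i - dB i else 0)"
  shows "2 * dform N W x (mv N A x) = dform N dT x x - dform N dB x x"
proof -
  have "2 * dform N W x (mv N A x) = dform N W x (mv N A x) + dform N W x (mv N A x)" by simp
  also have "\<dots> = dform N (\<lambda>i. dT i - dB i) x x" by (subst skew_sum) (rule diag_sum[OF assms])
  also have "\<dots> = dform N dT x x - dform N dB x x"
    unfolding dform_def by (simp add: algebra_simps sum_subtractf)
  finally show ?thesis .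
qed

lemma E2_gen:
  assumes "\<forall>i<N. \<forall>j<N. W i * A i j + W j * A j i = 0"
  shows "dform N W x (mv N A y) + dform N W y (mv N A x) = 0"
  using assms by (subst skew_sum) (simp)

lemma E3_gen:
  assumes "\<forall>i<N. \<forall>j<N. W i * A i j = (if i = j then d i else 0)"
  shows "dform N W x (mv N A y) = dform N d x y"
proof -
  have "dform N W x (mv N A y) = (\<Sum>i<N. \<Sum>j<N. x i * (W i * A i j) * y j)"
    unfolding dform_def mv_def by (simp add: sum_distrib_left mult_ac)
  also have "\<dots> = dform N d x y" by (rule diag_sum) (use assms in simp)
  finally show ?thesis .
qed

lemma dform_lin6:
  "dform N W x (\<lambda>i. c1 * y1 i + c2 * y2 i + c3 * y3 i + c4 * y4 i + c5 * y5 i + c6 * y6 i)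
   = c1 * dform N W x y1 + c2 * dform N W x y2 + c3 * dform N W x y3 + c4 * dform N W x y4
     + c5 * dform N W x y5 + c6 * dform N W x y6"
  unfolding dform_def by (simp add: sum.distrib sum_distrib_left algebra_simps)

theorem theorem3p4:
  fixes nt nx pt px nv :: nat
    and tn xn :: "nat \<Rightarrow> real"
    and Dtb Htb Qtb Dxb Hxb Qxb :: "nat \<Rightarrow> nat \<Rightarrow> real"
    and v \<omega> :: "nat \<Rightarrow> real"
    and \<epsilon> \<sigma>s \<sigma>a :: real
    and \<rho> \<rho>0 :: "nat \<Rightarrow> real"
    and g g0 :: "nat \<Rightarrow> nat \<Rightarrow> real"
  assumes sbp_t: "sbp nt pt tn Dtb Htb Qtb"
    and sbp_x: "sbp nx px xn Dxb Hxb Qxb"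
    and w_nonneg: "\<forall>k\<in>{1..nv}. 0 \<le> \<omega> k"
    and w_sum: "(\<Sum>k=1..nv. \<omega> k) = 1"
    and w_mom: "(\<Sum>k=1..nv. \<omega> k * v k) = 0"
    and eps: "0 < \<epsilon>" and sig_s: "0 < \<sigma>s" and sig_a: "0 \<le> \<sigma>a"
    and g0_avg: "\<forall>i < Suc nt * Suc nx. vavg nv \<omega> (\<lambda>k. g0 k i) = 0"
    and eq_rho: "\<forall>i < Suc nt * Suc nx.
        mv (Suc nt * Suc nx) (Dt_st nt nx Dtb) \<rho> i
        + mv (Suc nt * Suc nx) (Dxper_st nt nx Dxb Hxb) (\<lambda>j. vavg nv \<omega> (\<lambda>k. v k * g k j)) i
      = - \<sigma>a * \<rho> i - mv (Suc nt * Suc nx) (SAT_st nt nx Htb) (\<lambda>j. \<rho> j - \<rho>0 j) i"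
    and eq_g: "\<forall>k\<in>{1..nv}. \<forall>i < Suc nt * Suc nx.
        mv (Suc nt * Suc nx) (Dt_st nt nx Dtb) (g k) i
        + v k / \<epsilon> * mv (Suc nt * Suc nx) (Dxper_st nt nx Dxb Hxb) (g k) i
        - 1 / \<epsilon> * vavg nv \<omega> (\<lambda>k'. v k' * mv (Suc nt * Suc nx) (Dxper_st nt nx Dxb Hxb) (g k') i)
        + v k / \<epsilon>\<^sup>2 * mv (Suc nt * Suc nx) (Dxper_st nt nx Dxb Hxb) \<rho> i
      = - (\<sigma>s / \<epsilon>\<^sup>2 + \<sigma>a) * g k i
        - mv (Suc nt * Suc nx) (SAT_st nt nx Htb) (\<lambda>j. g k j - g0 k j) i"
  shows "1/2 * qf (Suc nt * Suc nx)
            (kron (Suc nx) (Suc nx) (mmul 1 (e_last nt) (mtr (e_last nt))) Hxb) \<rho>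
         + \<epsilon>\<^sup>2 / 2 * vavg nv \<omega> (\<lambda>k. qf (Suc nt * Suc nx)
            (kron (Suc nx) (Suc nx) (mmul 1 (e_last nt) (mtr (e_last nt))) Hxb) (g k))
       \<le> 1/2 * qf (Suc nt * Suc nx)
            (kron (Suc nx) (Suc nx) (mmul 1 (e_first nt) (mtr (e_first nt))) Hxb) \<rho>0
         + \<epsilon>\<^sup>2 / 2 * vavg nv \<omega> (\<lambda>k. qf (Suc nt * Suc nx)
            (kron (Suc nx) (Suc nx) (mmul 1 (e_first nt) (mtr (e_first nt))) Hxb) (g0 k))"

proof -
  let ?N = "Suc nt * Suc nx"
  let ?Dt = "Dt_st nt nx Dtb"
  let ?Dp = "Dxper_st nt nx Dxb Hxb"
  let ?S = "SAT_st nt nx Htb"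
  let ?KT = "kron (Suc nx) (Suc nx) (mmul 1 (e_last nt) (mtr (e_last nt))) Hxb"
  let ?KB = "kron (Suc nx) (Suc nx) (mmul 1 (e_first nt) (mtr (e_first nt))) Hxb"
  define W where "W = (\<lambda>i. Htb (i div Suc nx) (i div Suc nx) * Hxb (i mod Suc nx) (i mod Suc nx))"
  define dT where "dT = (\<lambda>i. if i div Suc nx = nt then Hxb (i mod Suc nx) (i mod Suc nx) else 0)"
  define dB where "dB = (\<lambda>i. if i div Suc nx = 0 then Hxb (i mod Suc nx) (i mod Suc nx) else (0::real))"
  have Hoff: "\<forall>i\<le>nx. \<forall>j\<le>nx. i \<noteq> j \<longrightarrow> Hxb i j = 0" using sbp_x unfolding sbp_def by auto
  have Hxp: "\<And>i. 0 < Hxb (i mod Suc nx) (i mod Suc nx)"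
    using sbp_x unfolding sbp_def by (auto simp: less_Suc_eq_le)
  have Wp: "\<And>i. i < ?N \<Longrightarrow> 0 < W i"
  proof -
    fix i assume "i < ?N"
    hence "i div Suc nx \<le> nt" by (rule div_bound)
    thus "0 < W i" using sbp_t Hxp[of i] unfolding sbp_def W_def by auto
  qed
  have dTp: "\<And>i. 0 \<le> dT i" unfolding dT_def using Hxp by (simp add: less_imp_le)
  have dBp: "\<And>i. 0 \<le> dB i" unfolding dB_def using Hxp by (simp add: less_imp_le)
  have qT: "\<And>x. qf ?N ?KT x = dform ?N dT x x"
    by (rule diag_qf) (use KT_diag[OF Hoff, of nt] in \<open>simp add: dT_def\<close>)
  have qB: "\<And>x. qf ?N ?KB x = dform ?N dB x x"
    by (rule diag_qf) (use KB_diag[OF Hoff, of nt] in \<open>simp add: dB_def\<close>)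
  have E1: "\<And>x. 2 * dform ?N W x (mv ?N ?Dt x) = dform ?N dT x x - dform ?N dB x x"
    by (rule E1_gen) (use Dt_skew[OF sbp_t, of nx Hxb] in \<open>simp add: W_def dT_def dB_def\<close>)
  have E2: "\<And>x y. dform ?N W x (mv ?N ?Dp y) + dform ?N W y (mv ?N ?Dp x) = 0"
    by (rule E2_gen) (use Dx_skew[OF sbp_x, of nt Htb] in \<open>simp add: W_def\<close>)
  have E3: "\<And>x y. dform ?N W x (mv ?N ?S y) = dform ?N dB x y"
    by (rule E3_gen) (use SAT_diag[OF sbp_t, of nx Hxb] in \<open>simp add: W_def dB_def\<close>)
  define c where "c = \<sigma>s / \<epsilon>\<^sup>2 + \<sigma>a"
  have cpos: "0 < c" unfolding c_def using sig_s sig_a eps by (simp add: add_pos_nonneg)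
  define G where "G = (\<lambda>j. vavg nv \<omega> (\<lambda>k. g k j))"
  define X where "X = (\<lambda>i. vavg nv \<omega> (\<lambda>k'. v k' * mv ?N ?Dp (g k') i))"
  define V where "V = (\<lambda>j. vavg nv \<omega> (\<lambda>k. v k * g k j))"
  have gk: "\<And>k i. k \<in> {1..nv} \<Longrightarrow> i < ?N \<Longrightarrow> mv ?N ?Dt (g k) i =
      (- c) * g k i + (-1) * mv ?N ?S (g k) i + 1 * mv ?N ?S (g0 k) i + (- (v k / \<epsilon>)) * mv ?N ?Dp (g k) i
      + (1 / \<epsilon>) * X i + (- (v k / \<epsilon>\<^sup>2)) * mv ?N ?Dp \<rho> i"
  proof -
    fix k i assume k: "k \<in> {1..nv}" and i: "i < ?N"
    have d: "mv ?N ?S (\<lambda>j. g k j - g0 k j) i = mv ?N ?S (g k) i - mv ?N ?S (g0 k) i" by (rule mv_diff)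
    have e: "mv ?N ?Dt (g k) i
        + v k / \<epsilon> * mv ?N ?Dp (g k) i
        - 1 / \<epsilon> * X i
        + v k / \<epsilon>\<^sup>2 * mv ?N ?Dp \<rho> i
      = - (\<sigma>s / \<epsilon>\<^sup>2 + \<sigma>a) * g k i
        - mv ?N ?S (\<lambda>j. g k j - g0 k j) i" using eq_g k i unfolding X_def by blast
    have e2: "mv ?N ?Dt (g k) i = - (\<sigma>s / \<epsilon>\<^sup>2 + \<sigma>a) * g k i
        - (mv ?N ?S (g k) i - mv ?N ?S (g0 k) i) - v k / \<epsilon> * mv ?N ?Dp (g k) i
        + 1 / \<epsilon> * X i - v k / \<epsilon>\<^sup>2 * mv ?N ?Dp \<rho> i"
      using e unfolding d by linarith
    show "?thesis k i" unfolding e2 c_def by (simp add: algebra_simps)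
  qed
  have rh: "\<And>i. i < ?N \<Longrightarrow> mv ?N ?Dt \<rho> i =
      (- \<sigma>a) * \<rho> i + (-1) * mv ?N ?S \<rho> i + 1 * mv ?N ?S \<rho>0 i + (-1) * mv ?N ?Dp V i
      + 0 * \<rho> i + 0 * \<rho> i"
  proof -
    fix i assume i: "i < ?N"
    have d: "mv ?N ?S (\<lambda>j. \<rho> j - \<rho>0 j) i = mv ?N ?S \<rho> i - mv ?N ?S \<rho>0 i" by (rule mv_diff)
    have e: "mv ?N ?Dt \<rho> i + mv ?N ?Dp V i = - \<sigma>a * \<rho> i - mv ?N ?S (\<lambda>j. \<rho> j - \<rho>0 j) i"
      using eq_rho i unfolding V_def by blast
    show "?thesis i" using e unfolding d by simp
  qed
  have G0: "\<And>i. i < ?N \<Longrightarrow> mv ?N ?S (\<lambda>j. vavg nv \<omega> (\<lambda>k. g0 k j)) i = 0"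
  proof -
    fix i
    have "mv ?N ?S (\<lambda>j. vavg nv \<omega> (\<lambda>k. g0 k j)) i = mv ?N ?S (\<lambda>j. 0) i"
      by (rule mv_cong) (use g0_avg in simp)
    thus "mv ?N ?S (\<lambda>j. vavg nv \<omega> (\<lambda>k. g0 k j)) i = 0" unfolding mv_def by simp
  qed
  have Gd: "\<And>i. i < ?N \<Longrightarrow> mv ?N ?Dt G i = (- c) * G i + (-1) * mv ?N ?S G i
      + 0 * G i + 0 * G i + 0 * G i + 0 * G i"
  proof -
    fix i assume i: "i < ?N"
    have lin: "\<And>f. mv ?N ?S (\<lambda>j. vavg nv \<omega> (\<lambda>k. f k j)) i = vavg nv \<omega> (\<lambda>k. mv ?N ?S (f k) i)"
      "\<And>f. mv ?N ?Dt (\<lambda>j. vavg nv \<omega> (\<lambda>k. f k j)) i = vavg nv \<omega> (\<lambda>k. mv ?N ?Dt (f k) i)"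
      unfolding vavg_def by (rule mv_lin)+
    have "mv ?N ?Dt G i = (\<Sum>k=1..nv. \<omega> k * mv ?N ?Dt (g k) i)"
      unfolding G_def vavg_def by (rule mv_lin)
    also have "\<dots> = (\<Sum>k=1..nv. \<omega> k * ((- c) * g k i + (-1) * mv ?N ?S (g k) i + 1 * mv ?N ?S (g0 k) i
        + (- (v k / \<epsilon>)) * mv ?N ?Dp (g k) i
      + (1 / \<epsilon>) * X i + (- (v k / \<epsilon>\<^sup>2)) * mv ?N ?Dp \<rho> i))"
      by (rule sum.cong[OF refl], subst gk[OF _ i], simp_all)
    also have "\<dots> = (- c) * (\<Sum>k=1..nv. \<omega> k * g k i) - (\<Sum>k=1..nv. \<omega> k * mv ?N ?S (g k) i)
        + (\<Sum>k=1..nv. \<omega> k * mv ?N ?S (g0 k) i) - (1/\<epsilon>) * (\<Sum>k=1..nv. \<omega> k * (v k * mv ?N ?Dp (g k) i))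
        + (1/\<epsilon>) * X i * (\<Sum>k=1..nv. \<omega> k) - (1/\<epsilon>\<^sup>2) * mv ?N ?Dp \<rho> i * (\<Sum>k=1..nv. \<omega> k * v k)"
      by (simp add: sum.distrib sum_subtractf sum_distrib_left sum_distrib_right algebra_simps sum_negf sum_divide_distrib)
    also have "\<dots> = (- c) * G i - mv ?N ?S G i"
      using G0[OF i] lin(1)[of g0] lin(1)[of g] w_sum w_mom
      unfolding G_def X_def vavg_def by simp
    finally show "?thesis i" by simp
  qed
  have GWG: "dform ?N W G G = 0"
  proof -
    have "dform ?N W G (mv ?N ?Dt G) = dform ?N W G (\<lambda>i. (- c) * G i + (-1) * mv ?N ?S G i
      + 0 * G i + 0 * G i + 0 * G i + 0 * G i)" by (rule dform_cong2) (rule Gd)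
    also have "\<dots> = (- c) * dform ?N W G G + (-1) * dform ?N W G (mv ?N ?S G)
      + 0 * dform ?N W G G + 0 * dform ?N W G G + 0 * dform ?N W G G + 0 * dform ?N W G G"
      by (rule dform_lin6)
    finally have "2 * dform ?N W G (mv ?N ?Dt G) = 2 * ((- c) * dform ?N W G G + (-1) * dform ?N dB G G)"
      unfolding E3 by simp
    hence "dform ?N dT G G + dform ?N dB G G + 2 * c * dform ?N W G G = 0" using E1[of G] by simp
    moreover have "0 \<le> dform ?N dT G G" "0 \<le> dform ?N dB G G" "0 \<le> dform ?N W G G"
      using dform_nonneg[of ?N dT G] dform_nonneg[of ?N dB G] dform_nonneg[of ?N W G] dTp dBp Wp
      by (auto simp: less_imp_le)
    ultimately show ?thesis using cpos
      by (smt (verit) mult_pos_pos mult_nonneg_nonneg)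
  qed
  have Gz: "\<And>i. i < ?N \<Longrightarrow> G i = 0" using dform_zero[OF Wp GWG] by blast
  have R: "dform ?N dT \<rho> \<rho> \<le> dform ?N dB \<rho>0 \<rho>0 - 2 * dform ?N W \<rho> (mv ?N ?Dp V)"
  proof -
    have "dform ?N W \<rho> (mv ?N ?Dt \<rho>) = dform ?N W \<rho> (\<lambda>i. (- \<sigma>a) * \<rho> i + (-1) * mv ?N ?S \<rho> i
      + 1 * mv ?N ?S \<rho>0 i + (-1) * mv ?N ?Dp V i + 0 * \<rho> i + 0 * \<rho> i)" by (rule dform_cong2) (rule rh)
    also have "\<dots> = (- \<sigma>a) * dform ?N W \<rho> \<rho> + (-1) * dform ?N W \<rho> (mv ?N ?S \<rho>)
      + 1 * dform ?N W \<rho> (mv ?N ?S \<rho>0) + (-1) * dform ?N W \<rho> (mv ?N ?Dp V)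
      + 0 * dform ?N W \<rho> \<rho> + 0 * dform ?N W \<rho> \<rho>" by (rule dform_lin6)
    finally have a: "dform ?N W \<rho> (mv ?N ?Dt \<rho>) = (- \<sigma>a) * dform ?N W \<rho> \<rho> - dform ?N dB \<rho> \<rho>
      + dform ?N dB \<rho> \<rho>0 - dform ?N W \<rho> (mv ?N ?Dp V)" unfolding E3 by simp
    have b: "2 * dform ?N dB \<rho> \<rho>0 \<le> dform ?N dB \<rho> \<rho> + dform ?N dB \<rho>0 \<rho>0"
      by (rule dform_ineq) (rule dBp)
    have c: "0 \<le> \<sigma>a * dform ?N W \<rho> \<rho>"
      using sig_a dform_nonneg[of ?N W \<rho>] Wp by (simp add: less_imp_le)
    show ?thesis using a b c E1[of \<rho>] by linarith
  qed
  define P where "P = (\<lambda>k. dform ?N W (g k) X)"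
  define Q where "Q = (\<lambda>k. dform ?N W (g k) (mv ?N ?Dp \<rho>))"
  have K: "\<And>k. k \<in> {1..nv} \<Longrightarrow> \<epsilon>\<^sup>2 * (\<omega> k * dform ?N dT (g k) (g k))
     \<le> \<epsilon>\<^sup>2 * (\<omega> k * dform ?N dB (g0 k) (g0 k)) + 2 * \<epsilon> * (\<omega> k * P k) - 2 * ((\<omega> k * v k) * Q k)"
  proof -
    fix k assume k: "k \<in> {1..nv}"
    have "dform ?N W (g k) (mv ?N ?Dt (g k)) = dform ?N W (g k) (\<lambda>i. (- c) * g k i + (-1) * mv ?N ?S (g k) i
      + 1 * mv ?N ?S (g0 k) i + (- (v k / \<epsilon>)) * mv ?N ?Dp (g k) i
      + (1 / \<epsilon>) * X i + (- (v k / \<epsilon>\<^sup>2)) * mv ?N ?Dp \<rho> i)" by (rule dform_cong2) (rule gk[OF k])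
    also have "\<dots> = (- c) * dform ?N W (g k) (g k) + (-1) * dform ?N W (g k) (mv ?N ?S (g k))
      + 1 * dform ?N W (g k) (mv ?N ?S (g0 k)) + (- (v k / \<epsilon>)) * dform ?N W (g k) (mv ?N ?Dp (g k))
      + (1 / \<epsilon>) * dform ?N W (g k) X + (- (v k / \<epsilon>\<^sup>2)) * dform ?N W (g k) (mv ?N ?Dp \<rho>)"
      by (rule dform_lin6)
    finally have a: "dform ?N W (g k) (mv ?N ?Dt (g k)) = (- c) * dform ?N W (g k) (g k) - dform ?N dB (g k) (g k)
      + dform ?N dB (g k) (g0 k) - (v k / \<epsilon>) * dform ?N W (g k) (mv ?N ?Dp (g k))
      + (1 / \<epsilon>) * P k - (v k / \<epsilon>\<^sup>2) * Q k" unfolding E3 P_def Q_def by simp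
    have z: "dform ?N W (g k) (mv ?N ?Dp (g k)) = 0" using E2[of "g k" "g k"] by simp
    have b: "2 * dform ?N dB (g k) (g0 k) \<le> dform ?N dB (g k) (g k) + dform ?N dB (g0 k) (g0 k)"
      by (rule dform_ineq) (rule dBp)
    have c: "(- c) * dform ?N W (g k) (g k) \<le> 0"
      using cpos dform_nonneg[of ?N W "g k"] Wp by (simp add: less_imp_le)
    have a2: "dform ?N W (g k) (mv ?N ?Dt (g k)) = (- c) * dform ?N W (g k) (g k) - dform ?N dB (g k) (g k)
      + dform ?N dB (g k) (g0 k) + (1 / \<epsilon>) * P k - (v k / \<epsilon>\<^sup>2) * Q k"
      using a by (simp only: z mult_zero_right diff_zero)
    have K0: "dform ?N dT (g k) (g k) \<le> dform ?N dB (g0 k) (g0 k) + 2 * ((1 / \<epsilon>) * P k) - 2 * ((v k / \<epsilon>\<^sup>2) * Q k)"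
      using a2 b c E1[of "g k"] by linarith
    have wk: "0 \<le> \<epsilon>\<^sup>2 * \<omega> k" using w_nonneg k by simp
    have "\<epsilon>\<^sup>2 * \<omega> k * dform ?N dT (g k) (g k)
      \<le> \<epsilon>\<^sup>2 * \<omega> k * (dform ?N dB (g0 k) (g0 k) + 2 * ((1 / \<epsilon>) * P k) - 2 * ((v k / \<epsilon>\<^sup>2) * Q k))"
      by (rule mult_left_mono[OF K0 wk])
    also have "\<dots> = \<epsilon>\<^sup>2 * (\<omega> k * dform ?N dB (g0 k) (g0 k)) + 2 * \<epsilon> * (\<omega> k * P k) - 2 * ((\<omega> k * v k) * Q k)"
      using eps by (simp add: field_simps power2_eq_square)
    finally show "?thesis k" by (simp add: mult.assoc)
  qed
  have Ksum: "(\<Sum>k=1..nv. \<epsilon>\<^sup>2 * (\<omega> k * dform ?N dT (g k) (g k)))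
     \<le> (\<Sum>k=1..nv. \<epsilon>\<^sup>2 * (\<omega> k * dform ?N dB (g0 k) (g0 k)) + 2 * \<epsilon> * (\<omega> k * P k) - 2 * ((\<omega> k * v k) * Q k))"
    by (rule sum_mono) (rule K)
  also have "\<dots> = \<epsilon>\<^sup>2 * (\<Sum>k=1..nv. \<omega> k * dform ?N dB (g0 k) (g0 k)) + 2 * \<epsilon> * (\<Sum>k=1..nv. \<omega> k * P k)
      - 2 * (\<Sum>k=1..nv. (\<omega> k * v k) * Q k)"
    by (simp add: sum.distrib sum_subtractf sum_distrib_left)
  finally have Ks: "\<epsilon>\<^sup>2 * (\<Sum>k=1..nv. \<omega> k * dform ?N dT (g k) (g k))
     \<le> \<epsilon>\<^sup>2 * (\<Sum>k=1..nv. \<omega> k * dform ?N dB (g0 k) (g0 k)) + 2 * \<epsilon> * (\<Sum>k=1..nv. \<omega> k * P k)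
      - 2 * (\<Sum>k=1..nv. (\<omega> k * v k) * Q k)" by (simp add: sum_distrib_left)
  have P0: "(\<Sum>k=1..nv. \<omega> k * P k) = 0"
  proof -
    have "(\<Sum>k=1..nv. \<omega> k * P k) = dform ?N W G X"
      unfolding P_def dform_lin1 G_def vavg_def ..
    also have "\<dots> = dform ?N W (\<lambda>_. 0) X" by (rule dform_cong1) (rule Gz)
    also have "\<dots> = 0" unfolding dform_def by simp
    finally show ?thesis .
  qed
  have QV: "(\<Sum>k=1..nv. (\<omega> k * v k) * Q k) = dform ?N W V (mv ?N ?Dp \<rho>)"
  proof -
    have "(\<Sum>k=1..nv. (\<omega> k * v k) * Q k) = dform ?N W (\<lambda>i. \<Sum>k=1..nv. (\<omega> k * v k) * g k i) (mv ?N ?Dp \<rho>)"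
      unfolding Q_def dform_lin1 ..
    also have "\<dots> = dform ?N W V (mv ?N ?Dp \<rho>)"
      unfolding V_def vavg_def by (simp add: mult.assoc)
    finally show ?thesis .
  qed
  have E2r: "dform ?N W \<rho> (mv ?N ?Dp V) + dform ?N W V (mv ?N ?Dp \<rho>) = 0" by (rule E2)
  have fin: "dform ?N dT \<rho> \<rho> + \<epsilon>\<^sup>2 * (\<Sum>k=1..nv. \<omega> k * dform ?N dT (g k) (g k))
     \<le> dform ?N dB \<rho>0 \<rho>0 + \<epsilon>\<^sup>2 * (\<Sum>k=1..nv. \<omega> k * dform ?N dB (g0 k) (g0 k))"
    using R Ks[unfolded P0 QV mult_zero_right add_0_right] E2r by linarith
  show ?thesis unfolding qT qB vavg_def using fin by simp
qed

end
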